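(* Let $p$ be an odd prime and $\lambda$ a nonempty BG-partition. Then $a^*_\lambda$ is even if and only if $p\mid a^*_\lambda$.
   Context: Partitions: $\lambda=(\lambda_1\ge\lambda_2\ge\cdots)$ with finitely many nonzero parts; $l(\lambda)$ = number of nonzero parts; Young diagram $[\lambda]=\{(i,j): i\ge1, 1\le j\le\lambda_i\}$ ($i$ = row, increasing downward). $\lambda'$ is the conjugate; self-conjugate means $\lambda=\lambda'$. $k(\lambda)=\max\{i:\lambda_i\ge i\}$; hook length $h_{ij}=\lambda_i+\lambda'_j-i-j+1$. A BG-partition is a self-conjugate partition with $p\nmid h_{ii}$ for all $1\le i\le k(\lambda)$. Rim and $p$-rim: the rim is the set of nodes $(i,j)\in[\lambda]$ with $(i+1,j+1)\notin[\lambda]$. Label rim nodes $1,2,\dots$ along the rim path from $(1,\lambda_1)$ to $(l(\lambda),1)$. The first $p$-segment is the rim nodes labelled $1,\dots,p$ (or all if fewer). If the last node $(i,j)$ of a $p$-segment lies in the last row, stop; otherwise with $l$ the smallest label in row $i+1$ the next $p$-segment is the rim nodes labelled $l,\dots,l+p-1$ (or up to the last). The $p$-rim is the union of the $p$-segments. $p$-rim*: $U_\lambda=\{(i,j)\in p\text{-rim of }\lambda: i\le j\}$, $L_\lambda=\{(j,i):(i,j)\in U_\lambda\}$, $\mathrm{Rim}^*_p(\lambda)=U_\lambda\cup L_\lambda$, $a^*_\lambda=\#\mathrm{Rim}^*_p(\lambda)$. *)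

theory Defs
  imports Main "HOL-Computational_Algebra.Primes"
begin

text \<open>A partition is represented by the list of its nonzero parts
  (weakly decreasing, all positive). Rows are indexed from 1.\<close>

definition is_partition :: "nat list \<Rightarrow> bool" where
  "is_partition la \<longleftrightarrow> sorted (rev la) \<and> 0 \<notin> set la"

definition part :: "nat list \<Rightarrow> nat \<Rightarrow> nat" where
  "part la i = (if 1 \<le> i \<and> i \<le> length la then la ! (i - 1) else 0)"

definition len :: "nat list \<Rightarrow> nat" where
  "len la = length la"

definition diagram :: "nat list \<Rightarrow> (nat \<times> nat) set" where
  "diagram la = {(i, j). 1 \<le> i \<and> 1 \<le> j \<and> j \<le> part la i}"

definition conj_part :: "nat list \<Rightarrow> nat \<Rightarrow> nat" where
  "conj_part la j = card {i. 1 \<le> i \<and> i \<le> length la \<and> j \<le> part la i}"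

definition self_conjugate :: "nat list \<Rightarrow> bool" where
  "self_conjugate la \<longleftrightarrow> (\<forall>j\<ge>1. conj_part la j = part la j)"

definition kk :: "nat list \<Rightarrow> nat" where
  "kk la = Max {i. 1 \<le> i \<and> i \<le> part la i}"

text \<open>hook length (for nodes of the diagram, where it is positive)\<close>
definition hook :: "nat list \<Rightarrow> nat \<Rightarrow> nat \<Rightarrow> nat" where
  "hook la i j = part la i + conj_part la j + 1 - i - j"

definition BG_partition :: "nat \<Rightarrow> nat list \<Rightarrow> bool" where
  "BG_partition p la \<longleftrightarrow> self_conjugate la \<and>
     (\<forall>i. 1 \<le> i \<and> i \<le> kk la \<longrightarrow> \<not> p dvd hook la i i)"

definition rim :: "nat list \<Rightarrow> (nat \<times> nat) set" where
  "rim la = {(i, j) \<in> diagram la. (i + 1, j + 1) \<notin> diagram la}"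

text \<open>Label of a rim node: its position along the rim path from (1,lambda_1)
  to (l(lambda),1); the path runs along rows top to bottom, and within a row
  from right to left.\<close>
definition rim_label :: "nat list \<Rightarrow> nat \<times> nat \<Rightarrow> nat" where
  "rim_label la x = card {y \<in> rim la. fst y < fst x \<or> (fst y = fst x \<and> snd y > snd x)} + 1"

definition rim_node :: "nat list \<Rightarrow> nat \<Rightarrow> nat \<times> nat" where
  "rim_node la m = (THE x. x \<in> rim la \<and> rim_label la x = m)"

definition segment :: "nat \<Rightarrow> nat list \<Rightarrow> nat \<Rightarrow> (nat \<times> nat) set" where
  "segment p la s = {x \<in> rim la. s \<le> rim_label la x \<and> rim_label la x \<le> s + p - 1}"

definition segment_last :: "nat \<Rightarrow> nat list \<Rightarrow> nat \<Rightarrow> nat" where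
  "segment_last p la s = min (s + p - 1) (card (rim la))"

inductive_set seg_starts :: "nat \<Rightarrow> nat list \<Rightarrow> nat set" for p la where
  first: "1 \<in> seg_starts p la"
| next_seg: "s \<in> seg_starts p la \<Longrightarrow> fst (rim_node la (segment_last p la s)) = r \<Longrightarrow>
     r < len la \<Longrightarrow>
     Min (rim_label la ` {x \<in> rim la. fst x = r + 1}) \<in> seg_starts p la"

definition p_rim :: "nat \<Rightarrow> nat list \<Rightarrow> (nat \<times> nat) set" where
  "p_rim p la = (\<Union>s \<in> seg_starts p la. segment p la s)"

definition U_set :: "nat \<Rightarrow> nat list \<Rightarrow> (nat \<times> nat) set" where
  "U_set p la = {(i, j) \<in> p_rim p la. i \<le> j}"

definition L_set :: "nat \<Rightarrow> nat list \<Rightarrow> (nat \<times> nat) set" where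
  "L_set p la = {(j, i) | i j. (i, j) \<in> U_set p la}"

definition rim_star :: "nat \<Rightarrow> nat list \<Rightarrow> (nat \<times> nat) set" where
  "rim_star p la = U_set p la \<union> L_set p la"

definition a_star :: "nat \<Rightarrow> nat list \<Rightarrow> nat" where
  "a_star p la = card (rim_star p la)"

end

theory Submission
  imports Defs
begin


locale scp =
  fixes la :: "nat list"
  assumes isp: "is_partition la" and ne: "la \<noteq> []" and sc: "self_conjugate la"
begin

abbreviation P where "P \<equiv> part la"
abbreviation n where "n \<equiv> length la"

lemma P_mono: "1 \<le> i \<Longrightarrow> i \<le> i' \<Longrightarrow> P i' \<le> P i"
proof -
  assume a: "1 \<le> i" "i \<le> i'"
  show ?thesis
  proof (cases "i' \<le> length la")
    case True
    have "sorted (rev la)" using isp by (simp add: is_partition_def)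
    from sorted_rev_nth_mono[OF this, of "i - 1" "i' - 1"] True a show ?thesis
      by (simp add: part_def)
  next
    case False then show ?thesis by (simp add: part_def)
  qed
qed

lemma P_pos: "1 \<le> i \<Longrightarrow> i \<le> n \<Longrightarrow> 1 \<le> P i"
proof -
  assume a: "1 \<le> i" "i \<le> n"
  have "la ! (i - 1) \<in> set la" using a by simp
  moreover have "0 \<notin> set la" using isp by (simp add: is_partition_def)
  ultimately have "la ! (i - 1) \<noteq> 0" by metis
  then show ?thesis using a by (simp add: part_def)
qed

lemma P_zero: "n < i \<Longrightarrow> P i = 0"
  by (simp add: part_def)

lemma P_pos_iff: "1 \<le> i \<Longrightarrow> (1 \<le> P i) = (i \<le> n)"
proof
  assume "1 \<le> i" "1 \<le> P i"
  then show "i \<le> n" using P_zero by (metis not_le not_one_le_zero)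
next
  assume "1 \<le> i" "i \<le> n"
  then show "1 \<le> P i" by (rule P_pos)
qed

lemma conj_iff: assumes "1 \<le> i" "1 \<le> j" shows "(j \<le> P i) = (i \<le> conj_part la j)"
proof -
  define A where "A = {i. 1 \<le> i \<and> i \<le> length la \<and> j \<le> P i}"
  have cp: "conj_part la j = card A" by (simp add: A_def conj_part_def)
  have "A \<subseteq> {..length la}" by (auto simp: A_def)
  then have fA: "finite A" by (rule finite_subset) simp
  show ?thesis
  proof
    assume h: "j \<le> P i"
    have "{1..i} \<subseteq> A"
    proof
      fix a assume "a \<in> {1..i}"
      then have "1 \<le> a" "a \<le> i" by auto
      then have "j \<le> P a" using P_mono[of a i] h by simp
      moreover have "a \<le> n" using \<open>a \<le> i\<close> h assms P_pos_iff[of i] by simp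
      ultimately show "a \<in> A" using \<open>1 \<le> a\<close> by (simp add: A_def)
    qed
    then have "card {1..i} \<le> card A" using fA card_mono by blast
    then show "i \<le> conj_part la j" using cp by simp
  next
    assume h: "i \<le> conj_part la j"
    show "j \<le> P i"
    proof (rule ccontr)
      assume "\<not> j \<le> P i"
      have "A \<subseteq> {1..i-1}"
      proof
        fix a assume "a \<in> A"
        then have "1 \<le> a" "j \<le> P a" by (auto simp: A_def)
        have "a < i"
        proof (rule ccontr)
          assume "\<not> a < i"
          then have "P a \<le> P i" using P_mono[of i a] assms by simp
          then show False using \<open>j \<le> P a\<close> \<open>\<not> j \<le> P i\<close> by simp
        qed
        then show "a \<in> {1..i-1}" using \<open>1 \<le> a\<close> by simp
      qed
      then have "card A \<le> card {1..i-1}" by (intro card_mono) auto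
      then show False using h cp assms by simp
    qed
  qed
qed

lemma conj_eq: "1 \<le> j \<Longrightarrow> conj_part la j = P j"
  using sc by (simp add: self_conjugate_def)

lemma sym_iff: "1 \<le> i \<Longrightarrow> 1 \<le> j \<Longrightarrow> (j \<le> P i) = (i \<le> P j)"
  using conj_iff conj_eq by metis

lemma len_P1: "P 1 = n"
proof -
  have "conj_part la 1 = card {i. 1 \<le> i \<and> i \<le> n \<and> 1 \<le> P i}" by (simp add: conj_part_def)
  also have "{i. 1 \<le> i \<and> i \<le> n \<and> 1 \<le> P i} = {1..n}" using P_pos by auto
  finally show ?thesis using conj_eq[of 1] by simp
qed

lemma n_pos: "1 \<le> n" using ne by (simp add: Suc_le_eq)

lemma P_le_n: "P i \<le> n"
proof (cases "i = 0")
  case True then show ?thesis by (simp add: part_def)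
next
  case False then have "P i \<le> P 1" by (intro P_mono) auto
  then show ?thesis using len_P1 by simp
qed

lemma mem_D: "((i, j) \<in> diagram la) = (1 \<le> i \<and> 1 \<le> j \<and> j \<le> P i)"
  by (simp add: diagram_def)

lemma mem_rim: "((i, j) \<in> rim la) = (1 \<le> i \<and> 1 \<le> j \<and> j \<le> P i \<and> P (i+1) \<le> j)"
  by (auto simp: rim_def mem_D)

lemma D_down: "(i', j') \<in> diagram la \<Longrightarrow> 1 \<le> i \<Longrightarrow> i \<le> i' \<Longrightarrow> 1 \<le> j \<Longrightarrow> j \<le> j'
  \<Longrightarrow> (i, j) \<in> diagram la"
  using P_mono[of i i'] by (auto simp: mem_D)

lemma D_sym: "(i, j) \<in> diagram la \<Longrightarrow> (j, i) \<in> diagram la"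
  using sym_iff[of i j] by (simp add: mem_D)

lemma rim_swap: "(i, j) \<in> rim la \<Longrightarrow> (j, i) \<in> rim la"
  using D_sym unfolding rim_def by blast

lemma rim_bounds: "(i, j) \<in> rim la \<Longrightarrow> 1 \<le> i \<and> i \<le> n \<and> 1 \<le> j \<and> j \<le> n"
proof -
  assume a: "(i, j) \<in> rim la"
  have "P i \<le> n" by (rule P_le_n)
  then show ?thesis using a P_pos_iff[of i] by (auto simp: mem_rim)
qed

lemma rim_finite: "finite (rim la)"
proof -
  have "rim la \<subseteq> {1..n} \<times> {1..n}" using rim_bounds by force
  then show ?thesis using finite_subset by blast
qed

lemma rim_before: assumes "(i, j) \<in> rim la" "(i', j') \<in> rim la" "i' < i"
  shows "int j' - int i' > int j - int i"
proof (rule ccontr)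
  assume h: "\<not> ?thesis"
  have "(i, j) \<in> diagram la" using assms(1) by (simp add: rim_def)
  moreover have "i' + 1 \<le> i" using assms(3) by simp
  moreover have "j' + 1 \<le> j" using h assms(3) by linarith
  ultimately have "(i' + 1, j' + 1) \<in> diagram la"
    using D_down[where i'=i and j'=j and i="i'+1" and j="j'+1"] by simp
  then show False using assms(2) by (simp add: rim_def)
qed

lemma before_iff: assumes "(i, j) \<in> rim la" "(i', j') \<in> rim la"
  shows "(i' < i \<or> (i' = i \<and> j' > j)) = (int j' - int i' > int j - int i)"
proof (cases "i' < i")
  case True then show ?thesis using rim_before[OF assms] by simp
next
  case False
  show ?thesis
  proof (cases "i < i'")
    case True then show ?thesis using rim_before[OF assms(2,1)] by simp
  next
    case False then show ?thesis using \<open>\<not> i' < i\<close> by simp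
  qed
qed

lemma rim_inj: assumes "(i, j) \<in> rim la" "(i', j') \<in> rim la" "int j' - int i' = int j - int i"
  shows "i' = i \<and> j' = j"
proof (cases "i' < i")
  case True then show ?thesis using rim_before[OF assms(1,2)] assms(3) by simp
next
  case False
  show ?thesis
  proof (cases "i < i'")
    case True then show ?thesis using rim_before[OF assms(2,1)] assms(3) by simp
  next
    case False then show ?thesis using \<open>\<not> i' < i\<close> assms(3) by simp
  qed
qed

lemma ex_rim_nonneg: assumes "d + 1 \<le> n" shows "\<exists>i. (i, i + d) \<in> rim la"
proof -
  define A where "A = {a. 1 \<le> a \<and> a + d \<le> P a}"
  have "1 \<in> A" using assms len_P1 by (simp add: A_def)
  have "A \<subseteq> {..n}"
  proof
    fix x assume "x \<in> A"
    then have "x + d \<le> P x" by (simp add: A_def)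
    moreover have "P x \<le> n" by (rule P_le_n)
    ultimately show "x \<in> {..n}" by simp
  qed
  then have fA: "finite A" using finite_subset by blast
  define a where "a = Max A"
  have aA: "a \<in> A" unfolding a_def using fA \<open>1 \<in> A\<close> by (intro Max_in) auto
  have "a + 1 \<notin> A"
  proof
    assume "a + 1 \<in> A"
    then have "a + 1 \<le> Max A" by (rule Max_ge[OF fA])
    then show False using a_def by simp
  qed
  then have "P (a + 1) \<le> a + d" by (simp add: A_def)
  then have "(a, a + d) \<in> rim la" using aA by (simp add: mem_rim A_def)
  then show ?thesis by blast
qed

lemma ex_rim_content: assumes "\<bar>c\<bar> \<le> int n - 1"
  shows "\<exists>i j. (i, j) \<in> rim la \<and> int j - int i = c"
proof (cases "c \<ge> 0")
  case True
  then have "nat c + 1 \<le> n" using assms by linarith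
  then obtain i where i: "(i, i + nat c) \<in> rim la" using ex_rim_nonneg by blast
  have "int (i + nat c) - int i = c" using True by simp
  then show ?thesis using i by blast
next
  case False
  then have "nat (- c) + 1 \<le> n" using assms by linarith
  then obtain i where "(i, i + nat (- c)) \<in> rim la" using ex_rim_nonneg by blast
  then have i: "(i + nat (- c), i) \<in> rim la" by (rule rim_swap)
  have "int i - int (i + nat (- c)) = c" using False by simp
  then show ?thesis using i by blast
qed

end


definition cnt :: "nat \<times> nat \<Rightarrow> int" where "cnt x = int (snd x) - int (fst x)"

context scp
begin

lemma rim_cnt_bounds: "x \<in> rim la \<Longrightarrow> \<bar>cnt x\<bar> \<le> int n - 1"
  using rim_bounds[of "fst x" "snd x"] by (auto simp: cnt_def)

lemma cnt_inj: "inj_on cnt (rim la)"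
  by (auto simp: inj_on_def cnt_def dest: rim_inj)

lemma label_formula: assumes x: "(i, j) \<in> rim la" shows "rim_label la (i, j) = n + i - j"
proof -
  define B where "B = {y \<in> rim la. fst y < fst (i,j) \<or> (fst y = fst (i,j) \<and> snd y > snd (i,j))}"
  have B1: "(fst y < i \<or> (fst y = i \<and> snd y > j)) = (cnt y > cnt (i, j))" if "y \<in> rim la" for y
  proof -
    obtain a b where y: "y = (a, b)" by force
    show ?thesis using before_iff[OF x, of a b] that y by (simp add: cnt_def)
  qed
  have B2: "B = {y \<in> rim la. cnt y > cnt (i, j)}"
    unfolding B_def using B1 by auto
  have img: "cnt ` B = {int j - int i <.. int n - 1}"
  proof
    show "cnt ` B \<subseteq> {int j - int i<..int n - 1}"
    proof
      fix c assume "c \<in> cnt ` B"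
      then obtain y where "y \<in> rim la" "cnt y > cnt (i, j)" "c = cnt y" by (auto simp: B2)
      then show "c \<in> {int j - int i<..int n - 1}" using rim_cnt_bounds[of y] by (auto simp: cnt_def)
    qed
  next
    show "{int j - int i<..int n - 1} \<subseteq> cnt ` B"
    proof
      fix c assume c: "c \<in> {int j - int i<..int n - 1}"
      have "\<bar>cnt (i,j)\<bar> \<le> int n - 1" using rim_cnt_bounds x by blast
      then have "\<bar>c\<bar> \<le> int n - 1" using c by (auto simp: cnt_def)
      then obtain a b where ab: "(a, b) \<in> rim la" "int b - int a = c" using ex_rim_content by blast
      then have "(a, b) \<in> B" using c by (simp add: B2 cnt_def)
      then show "c \<in> cnt ` B" using ab by (force simp: cnt_def)
    qed
  qed
  have "inj_on cnt B" using cnt_inj by (rule inj_on_subset) (simp add: B2)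
  then have "card B = card (cnt ` B)" by (simp add: card_image)
  also have "\<dots> = nat (int n - 1 - (int j - int i))" using img by simp
  finally have cB: "card B = nat (int n - 1 - (int j - int i))" .
  have "i \<ge> 1" "j \<le> n" using rim_bounds[OF x] by auto
  then show ?thesis using cB unfolding rim_label_def B_def by simp
qed

lemma card_rim: "card (rim la) = 2 * n - 1"
proof -
  have img: "cnt ` rim la = {-(int n - 1) .. int n - 1}"
  proof
    show "cnt ` rim la \<subseteq> {-(int n - 1) .. int n - 1}" using rim_cnt_bounds by force
  next
    show "{-(int n - 1) .. int n - 1} \<subseteq> cnt ` rim la"
    proof
      fix c :: int assume "c \<in> {-(int n - 1) .. int n - 1}"
      then have "\<bar>c\<bar> \<le> int n - 1" by auto
      then obtain a b where ab: "(a, b) \<in> rim la" "int b - int a = c" using ex_rim_content by blast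
      then show "c \<in> cnt ` rim la" by (force simp: cnt_def)
    qed
  qed
  have "card (rim la) = card (cnt ` rim la)" using cnt_inj by (simp add: card_image)
  then show ?thesis using img n_pos by simp
qed

lemma label_inj: assumes "x \<in> rim la" "y \<in> rim la" "rim_label la x = rim_label la y"
  shows "x = y"
proof -
  obtain a b where x: "x = (a, b)" by force
  obtain c d where y: "y = (c, d)" by force
  have "n + a - b = n + c - d" using assms label_formula x y by simp
  moreover have "b \<le> n" "d \<le> n" using rim_bounds assms x y by auto
  ultimately have "int b - int a = int d - int c" by linarith
  then show ?thesis using rim_inj assms x y by force
qed

lemma rim_node: assumes "1 \<le> m" "m \<le> 2 * n - 1"
  shows "rim_node la m \<in> rim la \<and> rim_label la (rim_node la m) = m"
proof -
  have "\<bar>int n - int m\<bar> \<le> int n - 1" using assms by linarith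
  then obtain a b where ab: "(a, b) \<in> rim la" "int b - int a = int n - int m"
    using ex_rim_content by blast
  have "b \<le> n" using rim_bounds ab by auto
  then have l: "rim_label la (a, b) = m" using label_formula[OF ab(1)] ab(2) by linarith
  have "\<exists>!x. x \<in> rim la \<and> rim_label la x = m"
    using ab(1) l label_inj by blast
  then show ?thesis unfolding rim_node_def by (rule theI')
qed

lemma node_label: "x \<in> rim la \<Longrightarrow> rim_node la (rim_label la x) = x"
  using label_inj unfolding rim_node_def by (intro the_equality) auto

end


lemma count_lemma:
  fixes S :: "nat set" and e :: "nat \<Rightarrow> nat" and p h :: nat
  assumes fin: "finite S"
    and full: "\<And>s. s \<in> S \<Longrightarrow> e s < h \<Longrightarrow> e s = s + p - 1"
    and le: "\<And>s. s \<in> S \<Longrightarrow> e s \<le> s + p - 1"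
    and p1: "1 \<le> p"
    and disj: "\<And>s0 s. s0 \<in> S \<Longrightarrow> s \<in> S \<Longrightarrow> s0 < s \<Longrightarrow> e s0 < s"
  shows "card ((\<Union>s\<in>S. {s..e s}) \<inter> {..h}) =
    (\<Sum>s\<in>{s\<in>S. s \<le> h}. if h \<le> e s then h - s + 1 else p)"
proof -
  define T where "T = {s\<in>S. s \<le> h}"
  have "(\<Union>s\<in>S. {s..e s}) \<inter> {..h} = (\<Union>s\<in>T. {s..e s} \<inter> {..h})"
    by (auto simp: T_def)
  also have "card \<dots> = (\<Sum>s\<in>T. card ({s..e s} \<inter> {..h}))"
  proof (rule card_UN_disjoint)
    show "finite T" using fin by (simp add: T_def)
    show "\<forall>i\<in>T. finite ({i..e i} \<inter> {..h})" by simp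
    show "\<forall>i\<in>T. \<forall>j\<in>T. i \<noteq> j \<longrightarrow> {i..e i} \<inter> {..h} \<inter> ({j..e j} \<inter> {..h}) = {}"
    proof (intro ballI impI)
      fix i j assume ij: "i \<in> T" "j \<in> T" "i \<noteq> j"
      show "{i..e i} \<inter> {..h} \<inter> ({j..e j} \<inter> {..h}) = {}"
      proof (cases "i < j")
        case True then have "e i < j" using disj ij by (auto simp: T_def)
        then show ?thesis by auto
      next
        case False then have "j < i" using ij by simp
        then have "e j < i" using disj ij by (auto simp: T_def)
        then show ?thesis by auto
      qed
    qed
  qed
  also have "\<dots> = (\<Sum>s\<in>T. if h \<le> e s then h - s + 1 else p)"
  proof (rule sum.cong)
    fix s assume s: "s \<in> T"
    show "card ({s..e s} \<inter> {..h}) = (if h \<le> e s then h - s + 1 else p)"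
    proof (cases "h \<le> e s")
      case True
      have "s \<le> h" using s by (simp add: T_def)
      have "{s..e s} \<inter> {..h} = {s..h}" using True by auto
      then show ?thesis using True \<open>s \<le> h\<close> by simp
    next
      case False
      then have "e s = s + p - 1" using full s by (auto simp: T_def)
      moreover have "{s..e s} \<inter> {..h} = {s..e s}" using False by auto
      ultimately show ?thesis using False p1 by simp
    qed
  qed simp
  finally show ?thesis by (simp add: T_def)
qed

lemma count_not_in:
  fixes S :: "nat set" and e :: "nat \<Rightarrow> nat" and p h :: nat
  assumes fin: "finite S"
    and full: "\<And>s. s \<in> S \<Longrightarrow> e s < h \<Longrightarrow> e s = s + p - 1"
    and le: "\<And>s. s \<in> S \<Longrightarrow> e s \<le> s + p - 1"
    and p1: "1 \<le> p"
    and disj: "\<And>s0 s. s0 \<in> S \<Longrightarrow> s \<in> S \<Longrightarrow> s0 < s \<Longrightarrow> e s0 < s"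
    and notin: "h \<notin> (\<Union>s\<in>S. {s..e s})"
  shows "p dvd card ((\<Union>s\<in>S. {s..e s}) \<inter> {..h})"
proof -
  have "(\<Sum>s\<in>{s\<in>S. s \<le> h}. if h \<le> e s then h - s + 1 else p) = (\<Sum>s\<in>{s\<in>S. s \<le> h}. p)"
    using notin by (intro sum.cong) auto
  then show ?thesis using count_lemma[OF assms(1-5)] by simp
qed

lemma count_in:
  fixes S :: "nat set" and e :: "nat \<Rightarrow> nat" and p h :: nat
  assumes fin: "finite S"
    and full: "\<And>s. s \<in> S \<Longrightarrow> e s < h \<Longrightarrow> e s = s + p - 1"
    and le: "\<And>s. s \<in> S \<Longrightarrow> e s \<le> s + p - 1"
    and p1: "1 \<le> p"
    and disj: "\<And>s0 s. s0 \<in> S \<Longrightarrow> s \<in> S \<Longrightarrow> s0 < s \<Longrightarrow> e s0 < s"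
    and ss: "s1 \<in> S" "s1 \<le> h" "h \<le> e s1"
  shows "\<exists>q. card ((\<Union>s\<in>S. {s..e s}) \<inter> {..h}) = p * q + (h - s1 + 1)"
proof -
  define T where "T = {s\<in>S. s \<le> h}"
  have fT: "finite T" using fin by (simp add: T_def)
  have s1T: "s1 \<in> T" using ss by (simp add: T_def)
  have other: "\<not> h \<le> e s" if "s \<in> T" "s \<noteq> s1" for s
  proof
    assume "h \<le> e s"
    show False
    proof (cases "s < s1")
      case True then have "e s < s1" using disj that ss by (auto simp: T_def)
      then show False using \<open>h \<le> e s\<close> ss by simp
    next
      case False then have "s1 < s" using that by simp
      then have "e s1 < s" using disj that ss by (auto simp: T_def)
      then show False using ss that by (simp add: T_def)
    qed
  qed
  have "(\<Sum>s\<in>T. if h \<le> e s then h - s + 1 else p) =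
      (h - s1 + 1) + (\<Sum>s\<in>T - {s1}. if h \<le> e s then h - s + 1 else p)"
    using sum.remove[OF fT s1T, of "\<lambda>s. if h \<le> e s then h - s + 1 else p"] ss by simp
  also have "(\<Sum>s\<in>T - {s1}. if h \<le> e s then h - s + 1 else p) = (\<Sum>s\<in>T - {s1}. p)"
    using other by (intro sum.cong) auto
  finally have "card ((\<Union>s\<in>S. {s..e s}) \<inter> {..h}) = (h - s1 + 1) + p * card (T - {s1})"
    using count_lemma[OF assms(1-5)] by (simp add: T_def)
  then show ?thesis by (metis add.commute)
qed



locale scpp = scp +
  fixes p :: nat
  assumes p1: "1 \<le> p"
begin

abbreviation S where "S \<equiv> seg_starts p la"
abbreviation e where "e s \<equiv> segment_last p la s"
abbreviation nx where "nx r \<equiv> n + (r + 1) - P (r + 1)"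

lemma e_eq: "e s = min (s + p - 1) (2 * n - 1)"
  by (simp add: segment_last_def card_rim)

lemma label_bounds: assumes "x \<in> rim la"
  shows "1 \<le> rim_label la x \<and> rim_label la x \<le> 2 * n - 1"
proof -
  obtain a b where x: "x = (a, b)" by force
  have h: "1 \<le> a" "a \<le> n" "1 \<le> b" "b \<le> n" using rim_bounds assms x by auto
  have l: "rim_label la x = n + a - b" using label_formula assms x by simp
  show ?thesis
  proof
    show "1 \<le> rim_label la x" using h l by linarith
    show "rim_label la x \<le> 2 * n - 1" using h l by linarith
  qed
qed

lemma label_fst_mono: assumes "x \<in> rim la" "y \<in> rim la" "rim_label la x \<le> rim_label la y"
  shows "fst x \<le> fst y"
proof (rule ccontr)
  assume h: "\<not> fst x \<le> fst y"
  obtain a b where x: "x = (a, b)" by force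
  obtain c d where y: "y = (c, d)" by force
  have "c < a" using h x y by simp
  then have "int d - int c > int b - int a" using before_iff[of a b c d] assms x y by simp
  moreover have "b \<le> n" "d \<le> n" using rim_bounds assms x y by auto
  moreover have "rim_label la x = n + a - b" "rim_label la y = n + c - d"
    using label_formula assms x y by auto
  ultimately show False using assms(3) by linarith
qed

lemma row_start_rim: "1 \<le> q \<Longrightarrow> q \<le> n \<Longrightarrow> (q, P q) \<in> rim la"
  using P_pos[of q] P_mono[of q "q + 1"] by (simp add: mem_rim)

lemma nxt_val: assumes "1 \<le> q" "q \<le> n"
  shows "Min (rim_label la ` {x \<in> rim la. fst x = q}) = n + q - P q"
proof (rule Min_eqI)
  show "finite (rim_label la ` {x \<in> rim la. fst x = q})" using rim_finite by simp
next
  fix y assume "y \<in> rim_label la ` {x \<in> rim la. fst x = q}"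
  then obtain b where b: "(q, b) \<in> rim la" "y = rim_label la (q, b)" by force
  have "b \<le> P q" using b by (simp add: mem_rim)
  then show "n + q - P q \<le> y" using b label_formula by simp
next
  have "(q, P q) \<in> rim la" using row_start_rim assms by simp
  moreover have "rim_label la (q, P q) = n + q - P q" using label_formula calculation by simp
  ultimately show "n + q - P q \<in> rim_label la ` {x \<in> rim la. fst x = q}"
    by (metis (mono_tags, lifting) fst_conv image_eqI mem_Collect_eq)
qed

lemma start_form: "s \<in> S \<Longrightarrow> \<exists>i. 1 \<le> i \<and> i \<le> n \<and> s = n + i - P i"
proof (induction rule: seg_starts.induct)
  case first
  then show ?case using len_P1 n_pos by (intro exI[of _ 1]) simp
next
  case (next_seg s r)
  have "r + 1 \<le> n" using next_seg by (simp add: len_def)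
  then show ?case using nxt_val[of "r + 1"] by (intro exI[of _ "r + 1"]) simp
qed

lemma start_bounds: "s \<in> S \<Longrightarrow> 1 \<le> s \<and> s \<le> 2 * n - 1"
proof -
  assume "s \<in> S"
  then obtain i where i: "1 \<le> i" "i \<le> n" "s = n + i - P i" using start_form by blast
  have h: "1 \<le> P i" "P i \<le> n" using P_pos P_le_n i by auto
  show ?thesis
  proof
    show "1 \<le> s" using h i by linarith
    show "s \<le> 2 * n - 1" using h i by linarith
  qed
qed

lemma e_bounds: "1 \<le> s \<Longrightarrow> s \<le> 2 * n - 1 \<Longrightarrow> 1 \<le> e s \<and> e s \<le> 2 * n - 1 \<and> s \<le> e s"
  using p1 by (auto simp: e_eq min_def)

lemma e_lt_nx: assumes "1 \<le> s" "s \<le> 2 * n - 1"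
  shows "e s < nx (fst (rim_node la (e s)))"
proof -
  have "rim_node la (e s) \<in> rim la \<and> rim_label la (rim_node la (e s)) = e s"
    using rim_node e_bounds assms by blast
  moreover obtain r j where x: "rim_node la (e s) = (r, j)" by force
  ultimately have rj: "(r, j) \<in> rim la" "rim_label la (r, j) = e s" by auto
  have "P (r + 1) \<le> j" "j \<le> n" using rj rim_bounds by (auto simp: mem_rim)
  moreover have "e s = n + r - j" using rj label_formula by simp
  ultimately show ?thesis using x by simp
qed

lemma nx_mono: "r \<le> r' \<Longrightarrow> nx r \<le> nx r'"
  using P_mono[of "r + 1" "r' + 1"] P_le_n[of "r + 1"] by simp

lemma row_mono_e: assumes "1 \<le> s" "s \<le> s'" "s' \<le> 2 * n - 1"
  shows "fst (rim_node la (e s)) \<le> fst (rim_node la (e s'))"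
proof -
  have a: "rim_node la (e s) \<in> rim la \<and> rim_label la (rim_node la (e s)) = e s"
    using rim_node e_bounds assms by simp
  have b: "rim_node la (e s') \<in> rim la \<and> rim_label la (rim_node la (e s')) = e s'"
    using rim_node e_bounds assms by simp
  have "e s \<le> e s'" using assms by (simp add: e_eq)
  then show ?thesis using label_fst_mono a b by simp
qed

lemma nx_le_start: assumes "1 \<le> s2" "s2 \<le> 2 * n - 1" "s1 \<in> S" "e s2 < s1"
  shows "nx (fst (rim_node la (e s2))) \<le> s1"
proof -
  obtain i where i: "1 \<le> i" "i \<le> n" "s1 = n + i - P i" using start_form assms by blast
  have y: "(i, P i) \<in> rim la" "rim_label la (i, P i) = s1"
    using row_start_rim i label_formula by auto
  have "rim_node la (e s2) \<in> rim la \<and> rim_label la (rim_node la (e s2)) = e s2"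
    using rim_node e_bounds assms by blast
  moreover obtain r j where x: "rim_node la (e s2) = (r, j)" by force
  ultimately have rj: "(r, j) \<in> rim la" "rim_label la (r, j) = e s2" by auto
  have "r \<le> i" using label_fst_mono[OF rj(1) y(1)] rj y assms by simp
  have lab: "e s2 = n + r - j" using rj label_formula by simp
  have "j \<le> P r" "j \<le> n" using rj rim_bounds by (auto simp: mem_rim)
  have "P i \<le> n" by (rule P_le_n)
  have "r \<noteq> i"
  proof
    assume "r = i"
    then have "j \<le> P i" using \<open>j \<le> P r\<close> by simp
    then show False using lab i assms(4) \<open>r = i\<close> \<open>P i \<le> n\<close> by linarith
  qed
  then have "r + 1 \<le> i" using \<open>r \<le> i\<close> by simp
  then have "P i \<le> P (r + 1)" using P_mono[of "r + 1" i] by simp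
  moreover have "P (r + 1) \<le> n" by (rule P_le_n)
  ultimately show ?thesis using x i \<open>r + 1 \<le> i\<close> by simp
qed

lemma Min_next: assumes "r < len la"
  shows "Min (rim_label la ` {x \<in> rim la. fst x = r + 1}) = nx r"
  using nxt_val[of "r + 1"] assms by (simp add: len_def)

lemma starts_disj: assumes "s0 \<in> S" shows "\<And>s. s \<in> S \<Longrightarrow> s0 < s \<Longrightarrow> e s0 < s"
  using assms
proof (induction rule: seg_starts.induct)
  case first
  fix s assume sS: "s \<in> S" and "1 < s"
  from sS show "e 1 < s"
  proof (cases rule: seg_starts.cases)
    case first then show ?thesis using \<open>1 < s\<close> by simp
  next
    case (next_seg s1 r1)
    have b1: "1 \<le> s1 \<and> s1 \<le> 2 * n - 1" using start_bounds next_seg by blast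
    have "e 1 \<le> e s1" using b1 by (auto simp: e_eq min_def)
    also have "e s1 < nx r1" using e_lt_nx b1 next_seg by blast
    finally show ?thesis using next_seg Min_next by simp
  qed
next
  case (next_seg s2 r2)
  fix s assume sS: "s \<in> S" and lt: "Min (rim_label la ` {x \<in> rim la. fst x = r2 + 1}) < s"
  have m2: "Min (rim_label la ` {x \<in> rim la. fst x = r2 + 1}) = nx r2" using Min_next next_seg by simp
  have b2: "1 \<le> s2 \<and> s2 \<le> 2 * n - 1" using start_bounds next_seg by blast
  have r2def: "fst (rim_node la (e s2)) = r2" using next_seg by simp
  note IH2 = next_seg.IH
  from sS show "e (Min (rim_label la ` {x \<in> rim la. fst x = r2 + 1})) < s"
  proof (cases rule: seg_starts.cases)
    case first then show ?thesis using lt m2 P_le_n[of "r2 + 1"] by simp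
  next
    case (next_seg s1 r1)
    have b1: "1 \<le> s1 \<and> s1 \<le> 2 * n - 1" using start_bounds next_seg by blast
    have m1: "s = nx r1" using Min_next next_seg by simp
    have "r2 < r1" using nx_mono[of r1 r2] lt m1 m2 by linarith
    have "s2 < s1"
    proof (rule ccontr)
      assume "\<not> s2 < s1"
      then have "r1 \<le> r2" using row_mono_e[of s1 s2] b1 b2 next_seg r2def by simp
      then show False using \<open>r2 < r1\<close> by simp
    qed
    then have "e s2 < s1" using IH2 next_seg by blast
    then have "nx r2 \<le> s1" using nx_le_start[of s2 s1] b2 next_seg r2def by blast
    then have "e (nx r2) \<le> e s1" by (auto simp: e_eq min_def)
    also have "e s1 < nx r1" using e_lt_nx b1 next_seg by blast
    finally show ?thesis using m1 m2 by simp
  qed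
qed

end


context scpp
begin

abbreviation M where "M \<equiv> (\<Union>s\<in>S. {s..e s})"

lemma S_finite: "finite S"
proof -
  have "S \<subseteq> {1..2 * n - 1}" using start_bounds by auto
  then show ?thesis using finite_subset by blast
qed

lemma seg_img: assumes "s \<in> S" shows "rim_label la ` segment p la s = {s..e s}"
proof
  show "rim_label la ` segment p la s \<subseteq> {s..e s}"
  proof
    fix m assume "m \<in> rim_label la ` segment p la s"
    then obtain x where x: "x \<in> rim la" "s \<le> rim_label la x" "rim_label la x \<le> s + p - 1"
      "m = rim_label la x" by (auto simp: segment_def)
    have "rim_label la x \<le> 2 * n - 1" using label_bounds x by blast
    then show "m \<in> {s..e s}" using x by (simp add: e_eq)
  qed
next
  show "{s..e s} \<subseteq> rim_label la ` segment p la s"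
  proof
    fix m assume m: "m \<in> {s..e s}"
    have "1 \<le> s" using start_bounds assms by blast
    then have m1: "1 \<le> m" "m \<le> 2 * n - 1" "m \<le> s + p - 1" using m by (auto simp: e_eq)
    have "rim_node la m \<in> rim la \<and> rim_label la (rim_node la m) = m" using rim_node m1 by blast
    then have "rim_node la m \<in> segment p la s" using m m1 by (simp add: segment_def)
    then show "m \<in> rim_label la ` segment p la s"
      using \<open>rim_node la m \<in> rim la \<and> _\<close> by (metis image_eqI)
  qed
qed

lemma prim_sub: "p_rim p la \<subseteq> rim la"
  by (auto simp: p_rim_def segment_def)

lemma M_eq: "rim_label la ` p_rim p la = M"
  unfolding p_rim_def image_UN using seg_img by simp

lemma label_inj_on: "inj_on (rim_label la) (p_rim p la)"
  using prim_sub label_inj by (meson inj_onI subsetD)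

lemma U_eq: "U_set p la = {x \<in> p_rim p la. rim_label la x \<le> n}"
proof -
  have "(fst x \<le> snd x) = (rim_label la x \<le> n)" if "x \<in> rim la" for x
  proof -
    obtain a b where x: "x = (a, b)" by force
    have "b \<le> n" using rim_bounds that x by auto
    moreover have "rim_label la x = n + a - b" using label_formula that x by simp
    ultimately show ?thesis using x by auto
  qed
  then show ?thesis using prim_sub by (auto simp: U_set_def)
qed

lemma card_U: "card (U_set p la) = card (M \<inter> {..n})"
proof -
  have "rim_label la ` U_set p la = M \<inter> {..n}"
    unfolding U_eq M_eq[symmetric] by auto
  moreover have "inj_on (rim_label la) (U_set p la)"
    using label_inj_on by (rule inj_on_subset) (auto simp: U_eq)
  ultimately show ?thesis by (metis card_image)
qed

lemma L_eq: "L_set p la = (\<lambda>(i, j). (j, i)) ` U_set p la"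
  by (auto simp: L_set_def)

lemma card_L: "card (L_set p la) = card (U_set p la)"
proof -
  have "inj_on (\<lambda>(i, j). (j, i)) (U_set p la)" by (auto simp: inj_on_def)
  then show ?thesis unfolding L_eq by (rule card_image)
qed

lemma UL: "U_set p la \<inter> L_set p la = {x \<in> p_rim p la. rim_label la x = n}"
proof
  show "U_set p la \<inter> L_set p la \<subseteq> {x \<in> p_rim p la. rim_label la x = n}"
  proof
    fix x assume x: "x \<in> U_set p la \<inter> L_set p la"
    obtain a b where ab: "x = (a, b)" by force
    have "a \<le> b" "(a, b) \<in> p_rim p la" using x ab by (auto simp: U_set_def)
    moreover have "b \<le> a" using x ab by (auto simp: L_set_def U_set_def)
    ultimately have "a = b" by simp
    moreover have "(a, b) \<in> rim la" using prim_sub \<open>(a, b) \<in> p_rim p la\<close> by blast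
    ultimately show "x \<in> {x \<in> p_rim p la. rim_label la x = n}"
      using ab label_formula \<open>(a, b) \<in> p_rim p la\<close> by auto
  qed
next
  show "{x \<in> p_rim p la. rim_label la x = n} \<subseteq> U_set p la \<inter> L_set p la"
  proof
    fix x assume x: "x \<in> {x \<in> p_rim p la. rim_label la x = n}"
    obtain a b where ab: "x = (a, b)" by force
    have r: "(a, b) \<in> rim la" "(a, b) \<in> p_rim p la" using x ab prim_sub by auto
    have "b \<le> n" using rim_bounds r by auto
    moreover have "n + a - b = n" using label_formula r x ab by simp
    ultimately have "a = b" by simp
    then have "x \<in> U_set p la" using r ab by (simp add: U_set_def)
    moreover have "x \<in> L_set p la" using calculation \<open>a = b\<close> ab by (auto simp: L_set_def)
    ultimately show "x \<in> U_set p la \<inter> L_set p la" by simp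
  qed
qed

lemma card_UL: "card (U_set p la \<inter> L_set p la) = card (M \<inter> {n})"
proof -
  have "rim_label la ` (U_set p la \<inter> L_set p la) = M \<inter> {n}"
    unfolding UL M_eq[symmetric] by (auto intro!: image_eqI)
  moreover have "inj_on (rim_label la) (U_set p la \<inter> L_set p la)"
    using label_inj_on by (rule inj_on_subset) (auto simp: UL)
  ultimately show ?thesis by (metis card_image)
qed

lemma a_star_eq: "a_star p la = 2 * card (M \<inter> {..n}) - card (M \<inter> {n})"
proof -
  have "U_set p la \<subseteq> rim la" using prim_sub by (auto simp: U_set_def)
  then have fU: "finite (U_set p la)" using rim_finite by (rule finite_subset)
  have fL: "finite (L_set p la)" using fU L_eq by simp
  have "card (U_set p la) + card (L_set p la) =
      card (U_set p la \<union> L_set p la) + card (U_set p la \<inter> L_set p la)"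
    by (rule card_Un_Int[OF fU fL])
  then show ?thesis using card_U card_L card_UL
    by (simp add: a_star_def rim_star_def)
qed

lemma full_e: "s \<in> S \<Longrightarrow> e s < n \<Longrightarrow> e s = s + p - 1"
  using n_pos unfolding e_eq by (cases "s + p - 1 \<le> 2 * n - 1") (auto simp: min_def)

lemma le_e: "s \<in> S \<Longrightarrow> e s \<le> s + p - 1"
  by (simp add: e_eq)

lemma kk_ge: "1 \<le> i \<Longrightarrow> i \<le> P i \<Longrightarrow> i \<le> kk la"
proof -
  assume a: "1 \<le> i" "i \<le> P i"
  have "{i. 1 \<le> i \<and> i \<le> P i} \<subseteq> {..n}"
  proof
    fix x assume "x \<in> {i. 1 \<le> i \<and> i \<le> P i}"
    then have "x \<le> P x" by simp
    moreover have "P x \<le> n" by (rule P_le_n)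
    ultimately show "x \<in> {..n}" by simp
  qed
  then have "finite {i. 1 \<le> i \<and> i \<le> P i}" using finite_subset by blast
  then show ?thesis using a unfolding kk_def by (intro Max_ge) auto
qed

lemma hook_diag: "1 \<le> i \<Longrightarrow> hook la i i = 2 * P i + 1 - 2 * i"
  using conj_eq[of i] by (simp add: hook_def)

end

lemma dvd_small: fixes p x :: nat assumes "p dvd x" "0 < x" "x < 2 * p" shows "x = p"
proof -
  obtain k where k: "x = p * k" using assms by (auto elim: dvdE)
  have "k \<noteq> 0" using k assms by auto
  moreover have "k < 2" using k assms by (metis mult_less_cancel1 mult.commute)
  ultimately have "k = 1" by simp
  then show ?thesis using k by simp
qed

theorem lemma3p20:
  fixes p :: nat and la :: "nat list"
  assumes "prime p" and "odd p"
    and "is_partition la" and "la \<noteq> []"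
    and "BG_partition p la"
  shows "even (a_star p la) \<longleftrightarrow> p dvd a_star p la"
proof -
  have p1: "1 \<le> p" using assms(1) prime_ge_1_nat by blast
  have sc: "self_conjugate la" using assms(5) by (simp add: BG_partition_def)
  interpret scpp la p using assms(3,4) sc p1 by unfold_locales
  have fin: "finite S" by (rule S_finite)
  note cl = fin full_e le_e p1 starts_disj
  show ?thesis
  proof (cases "n \<in> M")
    case False
    then have "M \<inter> {n} = {}" by auto
    then have a: "a_star p la = 2 * card (M \<inter> {..n})" using a_star_eq by simp
    have "p dvd card (M \<inter> {..n})" using count_not_in[OF cl False] by blast
    then show ?thesis using a by simp
  next
    case True
    then obtain s1 where s1: "s1 \<in> S" "s1 \<le> n" "n \<le> e s1" by auto
    have "M \<inter> {n} = {n}" using True by auto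
    then have a: "a_star p la = 2 * card (M \<inter> {..n}) - 1" using a_star_eq by simp
    have "\<exists>q. card (M \<inter> {..n}) = p * q + (n - s1 + 1)"
      by (rule count_in[OF cl s1])
    then obtain q where q: "card (M \<inter> {..n}) = p * q + (n - s1 + 1)" ..
    define t where "t = n - s1 + 1"
    have t1: "1 \<le> t" "t \<le> p" using s1 le_e[OF s1(1)] p1 by (auto simp: t_def)
    have a2: "a_star p la = 2 * p * q + (2 * t - 1)" using a q t1 by (simp add: t_def algebra_simps)
    have "odd (a_star p la)" using a2 t1 by simp
    moreover have "\<not> p dvd a_star p la"
    proof
      assume "p dvd a_star p la"
      then have h1: "p dvd 2 * p * q + (2 * t - 1)" unfolding a2 .
      have h2: "p dvd 2 * p * q" by (rule dvd_mult2, rule dvd_mult, rule dvd_refl)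
      have "p dvd (2 * t - 1)" using h1 dvd_add_right_iff[OF h2] by blast
      then have pt: "2 * t - 1 = p" using t1 by (intro dvd_small) auto
      obtain i where i: "1 \<le> i" "i \<le> n" "s1 = n + i - P i" using start_form s1 by blast
      have "P i \<le> n" by (rule P_le_n)
      then have ip: "i \<le> P i" using i s1 by linarith
      have "t = P i - i + 1" using i ip \<open>P i \<le> n\<close> by (simp add: t_def)
      then have "hook la i i = p" using hook_diag[OF i(1)] pt ip by simp
      moreover have "i \<le> kk la" using kk_ge i ip by blast
      ultimately have "p dvd hook la i i" by simp
      then show False using assms(5) i(1) \<open>i \<le> kk la\<close> by (simp add: BG_partition_def)
    qed
    ultimately show ?thesis by simp
  qed
qed

end
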